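(* Let $l\ge 0$ be an integer and $v\in\{0,1\}$. Let $\mathcal{D}_{n}$ be the set of partitions into exactly $n$ distinct parts, and for $\pi=(\lambda_1,\lambda_2,\dots)$ let $\mathcal{O}(\pi)=\lambda_1+\lambda_3+\lambda_5+\cdots$. For integers $N\ge0$, $k\ge1$, $m\ge0$ let $\mathcal{P}_N(k,m)$ be the set of partitions $(\lambda_1,\dots,\lambda_N)$ into exactly $N$ parts with $\lambda_N\ge k$ and $\lambda_i-\lambda_{i+1}\ge m$ for $1\le i\le N-1$ ($\mathcal{P}_0(k,m)$ contains only the empty partition). For a partition $\pi=(\lambda_1,\dots,\lambda_N)$ with $N\ge1$ let \[\omega_{2,2}(\pi)=(\lambda_N-1)\prod_{i=1}^{N-1}(\lambda_i-\lambda_{i+1}-1),\qquad \tilde\omega_1(\pi)=\prod_{i=1}^{N-1}(\lambda_i-\lambda_{i+1}-1),\] and let $\omega_{2,2}$ of the empty partition be $1$. Then \[\sum_{\pi\in\mathcal{D}_{2l+v}}q^{\mathcal{O}(\pi)}=\sum_{\pi\in\mathcal{P}_{l+v}(2-v,2)}\big[(1-v)\,\omega_{2,2}(\pi)+v\,\tilde\omega_1(\pi)\big]q^{|\pi|}.\]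
   Context: A partition is a finite weakly decreasing sequence of positive integers; $|\pi|$ is the sum of its parts. *)

theory Defs
  imports "HOL-Computational_Algebra.Formal_Power_Series"
begin

text \<open>A partition is a finite weakly decreasing list of positive integers
  (lambda_1 >= lambda_2 >= ...); list index i corresponds to lambda_(i+1).\<close>
definition is_partition :: "nat list \<Rightarrow> bool" where
  "is_partition xs \<longleftrightarrow> sorted_wrt (\<ge>) xs \<and> (\<forall>x\<in>set xs. 0 < x)"

definition psize :: "nat list \<Rightarrow> nat" where
  "psize xs = sum_list xs"

definition Dpart :: "nat \<Rightarrow> nat list set" where
  "Dpart n = {xs. is_partition xs \<and> distinct xs \<and> length xs = n}"

text \<open>O(pi) = lambda_1 + lambda_3 + lambda_5 + ... (0-based even indices).\<close>
definition Osum :: "nat list \<Rightarrow> nat" where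
  "Osum xs = (\<Sum>i\<in>{i. i < length xs \<and> even i}. xs ! i)"

definition Ppart :: "nat \<Rightarrow> nat \<Rightarrow> nat \<Rightarrow> nat list set" where
  "Ppart N k m = {xs. is_partition xs \<and> length xs = N \<and>
      (N \<ge> 1 \<longrightarrow> last xs \<ge> k) \<and>
      (\<forall>i. i + 1 < N \<longrightarrow> xs ! i - xs ! (i + 1) \<ge> m)}"

definition omega1t :: "nat list \<Rightarrow> int" where
  "omega1t xs = (\<Prod>i<length xs - 1. int (xs ! i) - int (xs ! (i + 1)) - 1)"

definition omega22 :: "nat list \<Rightarrow> int" where
  "omega22 xs = (if xs = [] then 1 else (int (last xs) - 1) * omega1t xs)"

end

theory Submission
  imports Defs
begin

fun odds :: "nat list \<Rightarrow> nat list" where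
  "odds [] = []"
| "odds [x] = [x]"
| "odds (x # y # xs) = x # odds xs"

fun gap2 :: "nat list \<Rightarrow> bool" where
  "gap2 (x # y # xs) = (y + 2 \<le> x \<and> gap2 (y # xs))"
| "gap2 _ = True"

lemma odds_Cons: "odds (x # t) = x # odds (tl t)"
  by (cases t) auto

lemma odds_Nil_iff[simp]: "odds xs = [] \<longleftrightarrow> xs = []"
  by (cases xs rule: odds.cases) auto

lemma length_odds: "length (odds xs) = (length xs + 1) div 2"
  by (induction xs rule: odds.induct) auto

lemma set_odds: "set (odds xs) \<subseteq> set xs"
  by (induction xs rule: odds.induct) auto

lemma Osum_alt: "Osum xs = (\<Sum>i<length xs. if even i then xs ! i else 0)"
proof -
  have "{i. i < length xs \<and> even i} = {..<length xs} \<inter> {i. even i}" by auto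
  then show ?thesis unfolding Osum_def
    by (simp add: sum.inter_restrict)
qed

lemma Osum_odds: "Osum xs = sum_list (odds xs)"
proof (induction xs rule: odds.induct)
  case 1 then show ?case by (simp add: Osum_alt)
next
  case (2 x) then show ?case by (simp add: Osum_alt)
next
  case (3 x y xs)
  have "Osum (x # y # xs) = x + Osum xs"
    unfolding Osum_alt
    apply (simp del: sum.lessThan_Suc add: sum.lessThan_Suc_shift)
    apply (rule sum.cong)
    by (auto simp: numeral_2_eq_2)
  then show ?case using 3 by simp
qed

lemma sorted_gt_distinct: "sorted_wrt (>) xs \<Longrightarrow> distinct (xs::nat list)"
  by (induction xs) force+

lemma ge_distinct_gt: "sorted_wrt (\<ge>) xs \<Longrightarrow> distinct xs \<Longrightarrow> sorted_wrt (>) (xs::nat list)"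
  by (induction xs) (auto simp: le_less)

lemma gap2_sorted: "gap2 xs \<Longrightarrow> sorted_wrt (\<ge>) xs"
  by (induction xs rule: gap2.induct) auto

lemma gap2_Cons: "gap2 (x # ys) = ((case ys of [] \<Rightarrow> True | y # _ \<Rightarrow> y + 2 \<le> x) \<and> gap2 ys)"
  by (cases ys) auto

lemma hd_odds: "xs \<noteq> [] \<Longrightarrow> hd (odds xs) = hd xs"
  by (cases xs rule: odds.cases) auto

lemma gap2_odds: "sorted_wrt (>) xs \<Longrightarrow> gap2 (odds xs)"
proof (induction xs rule: odds.induct)
  case (3 x y xs)
  then show ?case
    by (cases xs) (auto simp: gap2_Cons odds_Cons)
qed auto

lemma last_odds_ge2:
  "even (length xs) \<Longrightarrow> xs \<noteq> [] \<Longrightarrow> sorted_wrt (>) xs \<Longrightarrow> \<forall>x\<in>set xs. 0 < x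
   \<Longrightarrow> last (odds xs) \<ge> 2"
proof (induction xs rule: odds.induct)
  case (3 x y xs)
  show ?case
  proof (cases "xs = []")
    case True then show ?thesis using 3 by auto
  next
    case False then show ?thesis using 3 by auto
  qed
qed auto

lemma gap2_nth: "gap2 xs \<longleftrightarrow> (\<forall>i. i + 1 < length xs \<longrightarrow> xs ! i - xs ! (i + 1) \<ge> 2)"
proof (induction xs rule: gap2.induct)
  case (1 x y xs)
  show ?case
  proof
    assume "gap2 (x # y # xs)"
    then show "\<forall>i. i + 1 < length (x # y # xs) \<longrightarrow> (x # y # xs) ! i - (x # y # xs) ! (i + 1) \<ge> 2"
      using 1 by (auto simp: nth_Cons split: nat.splits)
  next
    assume h: "\<forall>i. i + 1 < length (x # y # xs) \<longrightarrow> (x # y # xs) ! i - (x # y # xs) ! (i + 1) \<ge> 2"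
    have "y + 2 \<le> x" using h[rule_format, of 0] by auto
    moreover have "\<forall>i. i + 1 < length (y # xs) \<longrightarrow> (y # xs) ! i - (y # xs) ! (i + 1) \<ge> 2"
      using h by (metis Suc_eq_plus1 length_Cons nth_Cons_Suc Suc_less_eq)
    ultimately show "gap2 (x # y # xs)" using 1 by simp
  qed
qed auto

definition F :: "nat \<Rightarrow> nat list \<Rightarrow> nat list set" where
  "F v mu = {\<pi>. sorted_wrt (>) \<pi> \<and> (\<forall>x\<in>set \<pi>. 0 < x) \<and> length \<pi> = 2 * length mu - v \<and> odds \<pi> = mu}"

lemma F_step:
  assumes "v \<le> 1"
  shows "F v (a # c # rest) = (\<lambda>(b, p). a # b # p) ` ({c<..<a} \<times> F v (c # rest))"
proof
  show "F v (a # c # rest) \<subseteq> (\<lambda>(b, p). a # b # p) ` ({c<..<a} \<times> F v (c # rest))"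
  proof
    fix \<pi> assume "\<pi> \<in> F v (a # c # rest)"
    hence h: "sorted_wrt (>) \<pi>" "\<forall>x\<in>set \<pi>. 0 < x" "length \<pi> = 2 * length (a#c#rest) - v"
      "odds \<pi> = a # c # rest" unfolding F_def by auto
    obtain x y p where pe: "\<pi> = x # y # p" using h(3) assms
      by (cases \<pi> rule: odds.cases) auto
    have x: "x = a" and op: "odds p = c # rest" using h(4) pe by auto
    obtain t where pt: "p = c # t" using op by (cases p) (auto simp: odds_Cons)
    have "p \<in> F v (c # rest)" using h pe op assms unfolding F_def by auto
    moreover have "y \<in> {c<..<a}" using h(1) pe pt x by auto
    ultimately show "\<pi> \<in> (\<lambda>(b, p). a # b # p) ` ({c<..<a} \<times> F v (c # rest))"
      using pe x by force
  qed
next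
  show "(\<lambda>(b, p). a # b # p) ` ({c<..<a} \<times> F v (c # rest)) \<subseteq> F v (a # c # rest)"
  proof safe
    fix b p assume b: "b \<in> {c<..<a}" and p: "p \<in> F v (c # rest)"
    hence h: "sorted_wrt (>) p" "\<forall>x\<in>set p. 0 < x" "length p = 2 * length (c#rest) - v"
      "odds p = c # rest" unfolding F_def by auto
    obtain t where pt: "p = c # t" using h(4) by (cases p) (auto simp: odds_Cons)
    have "\<forall>z\<in>set p. z \<le> c" using h(1) pt by auto
    then show "a # b # p \<in> F v (a # c # rest)" using b h assms unfolding F_def by auto
  qed
qed

lemma F_step_card:
  assumes "v \<le> 1" "finite (F v (c # rest))"
  shows "finite (F v (a # c # rest))" "card (F v (a # c # rest)) = (a - c - 1) * card (F v (c # rest))"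
proof -
  have inj: "inj_on (\<lambda>(b, p). a # b # (p::nat list)) ({c<..<a} \<times> F v (c # rest))"
    by (auto simp: inj_on_def)
  show "finite (F v (a # c # rest))" using assms by (simp add: F_step)
  show "card (F v (a # c # rest)) = (a - c - 1) * card (F v (c # rest))"
    using assms by (simp add: F_step card_image[OF inj] card_cartesian_product)
qed

lemma F1_single: "0 < a \<Longrightarrow> F 1 [a] = {[a]}"
  unfolding F_def by (auto simp: length_Suc_conv)

lemma F0_single: "F 0 [a] = (\<lambda>b. [a, b]) ` {0<..<a}"
proof
  show "F 0 [a] \<subseteq> (\<lambda>b. [a, b]) ` {0<..<a}"
  proof
    fix p assume "p \<in> F 0 [a]"
    then show "p \<in> (\<lambda>b. [a, b]) ` {0<..<a}" unfolding F_def
      by (auto simp: length_Suc_conv numeral_2_eq_2)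
  qed
qed (auto simp: F_def)

lemma F0_Nil: "F 0 [] = {[]}"
  unfolding F_def by auto

lemma omega1t_step: "omega1t (x # y # xs) = (int x - int y - 1) * omega1t (y # xs)"
  unfolding omega1t_def by (simp del: prod.lessThan_Suc add: prod.lessThan_Suc_shift)

lemma W1: "gap2 mu \<Longrightarrow> mu \<noteq> [] \<Longrightarrow> last mu \<ge> 1 \<Longrightarrow>
  finite (F 1 mu) \<and> int (card (F 1 mu)) = omega1t mu"
proof (induction mu rule: gap2.induct)
  case (1 x y xs)
  then have ih: "finite (F 1 (y # xs))" "int (card (F 1 (y # xs))) = omega1t (y # xs)" "y + 2 \<le> x"
    by auto
  then show ?case using F_step_card[of 1 y xs x]
    by (simp add: omega1t_step of_nat_diff)
next
  case ("2_2" x) then show ?case using F1_single[of x] by (simp add: omega1t_def)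
qed auto

lemma W0: "gap2 mu \<Longrightarrow> (mu \<noteq> [] \<longrightarrow> last mu \<ge> 2) \<Longrightarrow>
  finite (F 0 mu) \<and> int (card (F 0 mu)) = omega22 mu"
proof (induction mu rule: gap2.induct)
  case (1 x y xs)
  then have ih: "finite (F 0 (y # xs))" "int (card (F 0 (y # xs))) = omega22 (y # xs)" "y + 2 \<le> x"
    by auto
  have o: "omega22 (x # y # xs) = (int x - int y - 1) * omega22 (y # xs)"
    by (simp add: omega22_def omega1t_step)
  have "int (card (F 0 (x # y # xs))) = int (x - y - 1) * int (card (F 0 (y # xs)))"
    using F_step_card[of 0 y xs x] ih by simp
  also have "\<dots> = (int x - int y - 1) * omega22 (y # xs)" using ih by (simp add: of_nat_diff)
  finally show ?case using F_step_card[of 0 y xs x] ih o by simp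
next
  case ("2_2" x) then show ?case
    by (simp add: F0_single omega22_def omega1t_def card_image inj_on_def of_nat_diff)
next
  case "2_1" then show ?case by (simp add: F0_Nil omega22_def)
qed


lemma main_count:
  fixes l v n :: nat
  assumes v: "v \<le> 1"
  defines "A \<equiv> {\<pi> \<in> Dpart (2 * l + v). Osum \<pi> = n}"
  defines "B \<equiv> {\<pi> \<in> Ppart (l + v) (2 - v) 2. psize \<pi> = n}"
  shows "A = (\<Union>mu\<in>B. F v mu)"
proof
  show "A \<subseteq> (\<Union>mu\<in>B. F v mu)"
  proof
    fix p assume "p \<in> A"
    hence p: "is_partition p" "distinct p" "length p = 2 * l + v" "Osum p = n"
      unfolding A_def Dpart_def by auto
    have sp: "sorted_wrt (>) p" using p ge_distinct_gt unfolding is_partition_def by auto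
    have pos: "\<forall>x\<in>set p. 0 < x" using p unfolding is_partition_def by auto
    have len: "length (odds p) = l + v" using p(3) v by (auto simp: length_odds)
    have "p \<in> F v (odds p)" unfolding F_def using sp pos len p(3) by auto
    moreover have "odds p \<in> B"
    proof -
      have g: "gap2 (odds p)" using gap2_odds[OF sp] .
      have pos2: "\<forall>x\<in>set (odds p). 0 < x" using pos set_odds by blast
      have last: "l + v \<ge> 1 \<longrightarrow> last (odds p) \<ge> 2 - v"
      proof
        assume "l + v \<ge> 1"
        hence ne: "odds p \<noteq> []" using len by auto
        show "last (odds p) \<ge> 2 - v"
        proof (cases "v = 0")
          case True
          then show ?thesis using last_odds_ge2[of p] p(3) ne sp pos by auto
        next
          case False then show ?thesis using pos2 ne last_in_set[OF ne] by fastforce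
        qed
      qed
      show ?thesis unfolding B_def Ppart_def is_partition_def psize_def
        using g gap2_sorted[OF g] pos2 len last gap2_nth[of "odds p"] p(4) Osum_odds[of p]
        by auto
    qed
    ultimately show "p \<in> (\<Union>mu\<in>B. F v mu)" by blast
  qed
next
  show "(\<Union>mu\<in>B. F v mu) \<subseteq> A"
  proof safe
    fix mu p assume mu: "mu \<in> B" and p: "p \<in> F v mu"
    hence h: "sorted_wrt (>) p" "\<forall>x\<in>set p. 0 < x" "length p = 2 * length mu - v" "odds p = mu"
      unfolding F_def by auto
    have "length mu = l + v" "psize mu = n" using mu unfolding B_def Ppart_def by auto
    then show "p \<in> A" unfolding A_def Dpart_def is_partition_def using h v
      sorted_gt_distinct[OF h(1)] sorted_wrt_mono_rel[of p "(>)" "(\<ge>)"]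
      Osum_odds[of p] psize_def by auto
  qed
qed

lemma B_finite:
  "finite {\<pi> \<in> Ppart N k m. psize \<pi> = n}"
proof (rule finite_subset)
  show "{\<pi> \<in> Ppart N k m. psize \<pi> = n} \<subseteq> {xs. set xs \<subseteq> {0..n} \<and> length xs = N}"
    unfolding Ppart_def psize_def using member_le_sum_list by fastforce
  show "finite {xs. set xs \<subseteq> {0..n} \<and> length xs = N}" by (rule finite_lists_length_eq) simp
qed

theorem theorem9:
  fixes l v :: nat
  assumes "v \<in> {0, 1}"
  shows "Abs_fps (\<lambda>n. int (card {\<pi> \<in> Dpart (2 * l + v). Osum \<pi> = n}))
       = Abs_fps (\<lambda>n. \<Sum>\<pi> \<in> {\<pi> \<in> Ppart (l + v) (2 - v) 2. psize \<pi> = n}.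
            (1 - int v) * omega22 \<pi> + int v * omega1t \<pi>)"
proof -
  have v: "v \<le> 1" using assms by auto
  have W: "finite (F v mu) \<and> int (card (F v mu)) = (1 - int v) * omega22 mu + int v * omega1t mu"
    if mu: "mu \<in> {\<pi> \<in> Ppart (l + v) (2 - v) 2. psize \<pi> = n}" for mu n
  proof -
    have m: "is_partition mu" "length mu = l + v" "l + v \<ge> 1 \<longrightarrow> last mu \<ge> 2 - v"
      "\<forall>i. i + 1 < l + v \<longrightarrow> mu ! i - mu ! (i + 1) \<ge> 2"
      using mu unfolding Ppart_def by auto
    have g: "gap2 mu" using m gap2_nth by auto
    show ?thesis
    proof (cases "v = 0")
      case True
      have "mu \<noteq> [] \<longrightarrow> last mu \<ge> 2" using m True by (cases mu) auto
      then show ?thesis using W0[OF g] True by auto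
    next
      case False
      hence "v = 1" using v by auto
      moreover have "mu \<noteq> []" using m `v = 1` by auto
      ultimately show ?thesis using W1[OF g] m by auto
    qed
  qed
  have "\<And>n. int (card {\<pi> \<in> Dpart (2 * l + v). Osum \<pi> = n}) =
      (\<Sum>\<pi> \<in> {\<pi> \<in> Ppart (l + v) (2 - v) 2. psize \<pi> = n}. (1 - int v) * omega22 \<pi> + int v * omega1t \<pi>)"
  proof -
    fix n
    let ?B = "{\<pi> \<in> Ppart (l + v) (2 - v) 2. psize \<pi> = n}"
    have "card {\<pi> \<in> Dpart (2 * l + v). Osum \<pi> = n} = card (\<Union>mu\<in>?B. F v mu)"
      using main_count[OF v, of l n] by simp
    also have "\<dots> = (\<Sum>mu\<in>?B. card (F v mu))"
      by (rule card_UN_disjoint) (use B_finite W in \<open>auto simp: F_def\<close>)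
    finally have "int (card {\<pi> \<in> Dpart (2 * l + v). Osum \<pi> = n}) = (\<Sum>mu\<in>?B. int (card (F v mu)))"
      by simp
    also have "\<dots> = (\<Sum>mu\<in>?B. (1 - int v) * omega22 mu + int v * omega1t mu)"
      by (rule sum.cong) (use W in auto)
    finally show "int (card {\<pi> \<in> Dpart (2 * l + v). Osum \<pi> = n}) = (\<Sum>mu\<in>?B. (1 - int v) * omega22 mu + int v * omega1t mu)" .
  qed
  then show ?thesis by simp
qed

end
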